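(* For every $\pi\in\mathfrak{S}_n$, as polynomials in $x$, \[\Omega^{(\ell)}(\pi;x)=\Omega^{(r)}(\pi\eta;x),\qquad \Omega'(\pi;x)=\overline{\Omega}'(\eta\pi;x),\] where $\eta\in\mathfrak{S}_n$ is the involution $\eta(i)=n+1-i$.
   Context: $\mathfrak{S}_n$ is the symmetric group on $[n]$, permutations are words $(\pi(1),\dots,\pi(n))$, products are compositions, so $\pi\eta=(\pi(n),\dots,\pi(1))$ and $(\eta\pi)(i)=n+1-\pi(i)$. Let $Z$ be a finite totally ordered set each of whose elements is "plus-type" or "minus-type". For $\pi\in\mathfrak{S}_n$ let $N(\pi;Z)$ be the number of sequences $(a_1,\dots,a_n)\in Z^n$ with $a_1\le\dots\le a_n$ such that for every $s\in[n-1]$: if $\pi(s)<\pi(s+1)$ then $a_s<a_{s+1}$ or ($a_s=a_{s+1}$ is plus-type); if $\pi(s)>\pi(s+1)$ then $a_s<a_{s+1}$ or ($a_s=a_{s+1}$ is minus-type). For a positive integer $k$: $\Omega'(\pi;k)=N(\pi;\{\bar1<1<\dots<\bar k<k\})$; $\overline{\Omega}'(\pi;k)=N(\pi;\{0<\bar1<1<\dots<\overline{k-1}<k-1<\bar k\})$; $\Omega^{(\ell)}(\pi;k)=N(\pi;\{0<\bar1<1<\dots<\bar k<k\})$; $\Omega^{(r)}(\pi;k)=N(\pi;\{\bar1<1<\dots<\bar k<k<\overline{k+1}\})$; here $0$ and unbarred $j$ are plus-type and barred $\bar j$ minus-type. Each is, as a function of $k$, the restriction of a unique polynomial with rational coefficients,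 denoted by the same symbol. *)

theory Defs
  imports "HOL-Computational_Algebra.Polynomial" "HOL-Combinatorics.Permutations"
begin

text \<open>Permutations of [n] are functions sigma :: nat => nat with sigma permutes {1..n};
  the word of sigma is (sigma 1, ..., sigma n).  Products are compositions.\<close>

definition eta :: "nat \<Rightarrow> nat \<Rightarrow> nat" where
  "eta n i = (if i \<in> {1..n} then n + 1 - i else i)"

text \<open>Sequences
  (a_1,...,a_n) are represented by functions on {1..n}, extended by undefined.\<close>

definition Ncount :: "nat \<Rightarrow> (nat \<Rightarrow> nat) \<Rightarrow> 'z::linorder set \<Rightarrow> ('z \<Rightarrow> bool) \<Rightarrow> nat" where
  "Ncount n \<sigma> Z isplus = card {a :: nat \<Rightarrow> 'z.
      (\<forall>i\<in>{1..n}. a i \<in> Z) \<and> (\<forall>i. i \<notin> {1..n} \<longrightarrow> a i = undefined) \<and>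
      (\<forall>s\<in>{1..<n}. a s \<le> a (s+1)) \<and>
      (\<forall>s\<in>{1..<n}. \<sigma> s < \<sigma> (s+1) \<longrightarrow> a s < a (s+1) \<or> (a s = a (s+1) \<and> isplus (a s))) \<and>
      (\<forall>s\<in>{1..<n}. \<sigma> s > \<sigma> (s+1) \<longrightarrow> a s < a (s+1) \<or> (a s = a (s+1) \<and> \<not> isplus (a s)))}"

text \<open>Encoding of the alphabets as natural numbers: 0 ~ 0, bar j ~ 2j-1, j ~ 2j.
  This is order preserving; plus-type elements (0 and unbarred j) are the even ones.\<close>

definition Omega' :: "nat \<Rightarrow> (nat \<Rightarrow> nat) \<Rightarrow> nat \<Rightarrow> nat" where
  "Omega' n \<sigma> k = Ncount n \<sigma> {1..2*k} even"          \<comment> \<open>{bar1<1<...<bark<k}\<close>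

definition Omegabar' :: "nat \<Rightarrow> (nat \<Rightarrow> nat) \<Rightarrow> nat \<Rightarrow> nat" where
  "Omegabar' n \<sigma> k = Ncount n \<sigma> {0..2*k-1} even"     \<comment> \<open>{0<bar1<1<...<k-1<bark}\<close>

definition Omega_l :: "nat \<Rightarrow> (nat \<Rightarrow> nat) \<Rightarrow> nat \<Rightarrow> nat" where
  "Omega_l n \<sigma> k = Ncount n \<sigma> {0..2*k} even"         \<comment> \<open>{0<bar1<1<...<bark<k}\<close>

definition Omega_r :: "nat \<Rightarrow> (nat \<Rightarrow> nat) \<Rightarrow> nat \<Rightarrow> nat" where
  "Omega_r n \<sigma> k = Ncount n \<sigma> {1..2*k+1} even"       \<comment> \<open>{bar1<1<...<k<bar(k+1)}\<close>

definition as_poly :: "(nat \<Rightarrow> nat) \<Rightarrow> rat poly" where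
  "as_poly f = (THE p. \<forall>k::nat. k > 0 \<longrightarrow> poly p (of_nat k) = of_nat (f k))"

end

theory Submission
  imports Defs
begin

lemma card_eq_wit:
  assumes "\<And>a. a\<in>A \<Longrightarrow> f a \<in> B" "\<And>b. b\<in>B \<Longrightarrow> g b \<in> A"
    "\<And>a. a\<in>A \<Longrightarrow> g (f a) = a" "\<And>b. b\<in>B \<Longrightarrow> f (g b) = b"
  shows "card A = card B"
proof -
  have "bij_betw f A B" by (rule bij_betw_byWitness[where f'=g]) (use assms in auto)
  thus ?thesis by (rule bij_betw_same_card)
qed

lemma as_poly_cong: "(\<And>k. k > 0 \<Longrightarrow> f k = g k) \<Longrightarrow> as_poly f = as_poly g"
  unfolding as_poly_def by (metis (no_types, lifting))

lemma part2:
  assumes "\<sigma> permutes {1..n}" and kp: "k > 0"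
  shows "Ncount n \<sigma> {1..2*(k::nat)} even = Ncount n (eta n \<circ> \<sigma>) {0..2*k-1} even"
proof -
  have sv: "\<And>i. i \<in> {1..n} \<Longrightarrow> \<sigma> i \<in> {1..n}" using permutes_in_image[OF assms(1)] by blast
  have et: "\<And>s. s \<in> {1..<n} \<Longrightarrow> ((eta n \<circ> \<sigma>) s < (eta n \<circ> \<sigma>) (s+1)) = (\<sigma> s > \<sigma> (s+1))
       \<and> ((eta n \<circ> \<sigma>) s > (eta n \<circ> \<sigma>) (s+1)) = (\<sigma> s < \<sigma> (s+1))"
  proof -
    fix s assume s: "s \<in> {1..<n}"
    have "\<sigma> s \<in> {1..n}" "\<sigma> (s+1) \<in> {1..n}" using s sv by auto
    thus "?thesis s" unfolding eta_def by auto
  qed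
  show ?thesis unfolding Ncount_def
  proof (rule card_eq_wit[where f="\<lambda>a i. if i \<in> {1..n} then a i - 1 else undefined"
        and g="\<lambda>a i. if i \<in> {1..n} then a i + 1 else undefined"], goal_cases)
    case (1 a)
    have A1: "\<And>i. i\<in>{1..n} \<Longrightarrow> a i \<in> {1..2*k}" using 1 by auto
    have A3: "\<And>s. s\<in>{1..<n} \<Longrightarrow> a s \<le> a (s+1)" using 1 by auto
    have A4: "\<And>s. s\<in>{1..<n} \<Longrightarrow> \<sigma> s < \<sigma> (s+1) \<Longrightarrow> a s < a (s+1) \<or> (a s = a (s+1) \<and> even (a s))" using 1 by auto
    have A5: "\<And>s. s\<in>{1..<n} \<Longrightarrow> \<sigma> s > \<sigma> (s+1) \<Longrightarrow> a s < a (s+1) \<or> (a s = a (s+1) \<and> \<not> even (a s))" using 1 by auto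
    show ?case apply (simp only: mem_Collect_eq)
      apply (intro conjI ballI allI impI)
      subgoal for i using A1[of i] kp by auto
      subgoal by auto
      subgoal for s using A3[of s] A1[of s] A1[of "s+1"] by auto
      subgoal premises p for s proof -
        have r: "s \<in> {1..n}" "s+1 \<in> {1..n}" using p(1) by auto
        have c': "\<sigma> s > \<sigma> (s+1)" using et[OF p(1)] p(2) by simp
        have h: "a s < a(s+1) \<or> (a s = a(s+1) \<and> \<not> even (a s))" using A5[OF p(1) c'] .
        have "a s \<in> {1..2*k}" "a (s+1) \<in> {1..2*k}" using A1 r by auto
        then show ?thesis using h r by (auto simp: )
      qed
      subgoal premises p for s proof -
        have r: "s \<in> {1..n}" "s+1 \<in> {1..n}" using p(1) by auto
        have c': "\<sigma> s < \<sigma> (s+1)" using et[OF p(1)] p(2) by simp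
        have h: "a s < a(s+1) \<or> (a s = a(s+1) \<and> even (a s))" using A4[OF p(1) c'] .
        have "a s \<in> {1..2*k}" "a (s+1) \<in> {1..2*k}" using A1 r by auto
        then show ?thesis using h r by (auto simp: )
      qed
      done
  next
    case (2 a)
    have A1: "\<And>i. i\<in>{1..n} \<Longrightarrow> a i \<in> {0..2*k-1}" using 2 by auto
    have A3: "\<And>s. s\<in>{1..<n} \<Longrightarrow> a s \<le> a (s+1)" using 2 by auto
    have A4: "\<And>s. s\<in>{1..<n} \<Longrightarrow> (eta n \<circ> \<sigma>) s < (eta n \<circ> \<sigma>) (s+1) \<Longrightarrow> a s < a (s+1) \<or> (a s = a (s+1) \<and> even (a s))" using 2 by auto
    have A5: "\<And>s. s\<in>{1..<n} \<Longrightarrow> (eta n \<circ> \<sigma>) s > (eta n \<circ> \<sigma>) (s+1) \<Longrightarrow> a s < a (s+1) \<or> (a s = a (s+1) \<and> \<not> even (a s))" using 2 by auto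
    show ?case apply (simp only: mem_Collect_eq)
      apply (intro conjI ballI allI impI)
      subgoal for i using A1[of i] kp by auto
      subgoal by auto
      subgoal for s using A3[of s] A1[of s] A1[of "s+1"] by auto
      subgoal premises p for s proof -
        have r: "s \<in> {1..n}" "s+1 \<in> {1..n}" using p(1) by auto
        have c': "(eta n \<circ> \<sigma>) s > (eta n \<circ> \<sigma>) (s+1)" using et[OF p(1)] p(2) by simp
        have h: "a s < a(s+1) \<or> (a s = a(s+1) \<and> \<not> even (a s))" using A5[OF p(1) c'] .
        have "a s \<in> {0..2*k-1}" "a (s+1) \<in> {0..2*k-1}" using A1 r by auto
        then show ?thesis using h r by (auto simp: )
      qed
      subgoal premises p for s proof -
        have r: "s \<in> {1..n}" "s+1 \<in> {1..n}" using p(1) by auto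
        have c': "(eta n \<circ> \<sigma>) s < (eta n \<circ> \<sigma>) (s+1)" using et[OF p(1)] p(2) by simp
        have h: "a s < a(s+1) \<or> (a s = a(s+1) \<and> even (a s))" using A4[OF p(1) c'] .
        have "a s \<in> {0..2*k-1}" "a (s+1) \<in> {0..2*k-1}" using A1 r by auto
        then show ?thesis using h r by (auto simp: )
      qed
      done
  next
    case (3 a)
    show ?case
    proof (rule ext, goal_cases)
      case (1 i) show ?case using 3 by (cases "i \<in> {1..n}") (auto dest!: bspec[where x=i])
    qed
  next
    case (4 a)
    show ?case
    proof (rule ext, goal_cases)
      case (1 i) show ?case using 4 by (cases "i \<in> {1..n}") (auto dest!: bspec[where x=i])
    qed
  qed
qed

definition NS :: "nat \<Rightarrow> (nat \<Rightarrow> nat) \<Rightarrow> nat set \<Rightarrow> (nat \<Rightarrow> nat) set" where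
  "NS n \<sigma> Z = {a :: nat \<Rightarrow> nat.
      (\<forall>i\<in>{1..n}. a i \<in> Z) \<and> (\<forall>i. i \<notin> {1..n} \<longrightarrow> a i = undefined) \<and>
      (\<forall>s\<in>{1..<n}. a s \<le> a (s+1)) \<and>
      (\<forall>s\<in>{1..<n}. \<sigma> s < \<sigma> (s+1) \<longrightarrow> a s < a (s+1) \<or> (a s = a (s+1) \<and> even (a s))) \<and>
      (\<forall>s\<in>{1..<n}. \<sigma> s > \<sigma> (s+1) \<longrightarrow> a s < a (s+1) \<or> (a s = a (s+1) \<and> \<not> even (a s)))}"

lemma Ncount_NS: "Ncount n \<sigma> Z even = card (NS n \<sigma> Z)"
  unfolding Ncount_def NS_def by simp

lemma eta_eta: "eta n (eta n i) = i"
  unfolding eta_def by auto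

lemma par: "odd (c::nat) \<Longrightarrow> x \<le> c \<Longrightarrow> even (c - x) = odd x"
  by (simp add: even_diff_nat)

lemma rev_map:
  assumes a: "a \<in> NS n \<sigma> {lo..hi}" and c: "hi \<le> c" "odd c"
  shows "(\<lambda>i. if i\<in>{1..n} then c - a (n+1-i) else undefined) \<in> NS n (\<sigma> \<circ> eta n) {c-hi..c-lo}"
proof -
  have A1: "\<And>i. i\<in>{1..n} \<Longrightarrow> a i \<in> {lo..hi}" using a unfolding NS_def by auto
  have A3: "\<And>s. s\<in>{1..<n} \<Longrightarrow> a s \<le> a (s+1)" using a unfolding NS_def by auto
  have A4: "\<And>s. s\<in>{1..<n} \<Longrightarrow> \<sigma> s < \<sigma> (s+1) \<Longrightarrow> a s < a (s+1) \<or> (a s = a (s+1) \<and> even (a s))" using a unfolding NS_def by auto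
  have A5: "\<And>s. s\<in>{1..<n} \<Longrightarrow> \<sigma> s > \<sigma> (s+1) \<Longrightarrow> a s < a (s+1) \<or> (a s = a (s+1) \<and> \<not> even (a s))" using a unfolding NS_def by auto
  show ?thesis unfolding NS_def mem_Collect_eq
  proof (intro conjI ballI allI impI)
    fix i assume i: "i \<in> {1..n}"
    then have "n+1-i \<in> {1..n}" by auto
    then show "(if i\<in>{1..n} then c - a (n+1-i) else undefined) \<in> {c-hi..c-lo}"
      using A1[of "n+1-i"] i c by auto
  next
    fix i assume "i \<notin> {1..n}" then show "(if i\<in>{1..n} then c - a (n+1-i) else undefined) = undefined" by auto
  next
    fix s assume s: "s \<in> {1..<n}"
    define t where "t = n - s"
    have t: "t \<in> {1..<n}" "n+1-s = t+1" "n+1-(s+1) = t" "s \<in> {1..n}" "s+1 \<in> {1..n}"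
      "t \<in> {1..n}" "t+1 \<in> {1..n}" using s unfolding t_def by auto
    have e: "(\<sigma> \<circ> eta n) s = \<sigma> (t+1)" "(\<sigma> \<circ> eta n) (s+1) = \<sigma> t"
      using t unfolding eta_def by auto
    have r: "a t \<in> {lo..hi}" "a (t+1) \<in> {lo..hi}" using A1 t by auto
    have b1: "(if s\<in>{1..n} then c - a (n+1-s) else undefined) = c - a (t+1)" using t by simp
    have b2: "(if s+1\<in>{1..n} then c - a (n+1-(s+1)) else undefined) = c - a t" using t by simp
    have le: "a t \<le> c" "a (t+1) \<le> c" using r c by auto
    show "(if s\<in>{1..n} then c - a (n+1-s) else undefined) \<le> (if s+1\<in>{1..n} then c - a (n+1-(s+1)) else undefined)"
      unfolding b1 b2 using A3[OF t(1)] le by linarith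
    {
      assume "(\<sigma> \<circ> eta n) s < (\<sigma> \<circ> eta n) (s+1)"
      then have "\<sigma> t > \<sigma> (t+1)" using e by simp
      from A5[OF t(1) this] r c show "(if s\<in>{1..n} then c - a (n+1-s) else undefined) < (if s+1\<in>{1..n} then c - a (n+1-(s+1)) else undefined) \<or>
        ((if s\<in>{1..n} then c - a (n+1-s) else undefined) = (if s+1\<in>{1..n} then c - a (n+1-(s+1)) else undefined) \<and>
          even (if s\<in>{1..n} then c - a (n+1-s) else undefined))"
        unfolding b1 b2 using le par[OF c(2) le(1)] par[OF c(2) le(2)] by auto
    }
    {
      assume "(\<sigma> \<circ> eta n) s > (\<sigma> \<circ> eta n) (s+1)"
      then have "\<sigma> t < \<sigma> (t+1)" using e by simp
      from A4[OF t(1) this] r c show "(if s\<in>{1..n} then c - a (n+1-s) else undefined) < (if s+1\<in>{1..n} then c - a (n+1-(s+1)) else undefined) \<or>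
        ((if s\<in>{1..n} then c - a (n+1-s) else undefined) = (if s+1\<in>{1..n} then c - a (n+1-(s+1)) else undefined) \<and>
          \<not> even (if s\<in>{1..n} then c - a (n+1-s) else undefined))"
        unfolding b1 b2 using le par[OF c(2) le(1)] par[OF c(2) le(2)] by auto
    }
  qed
qed


lemma rev_inv:
  assumes a: "a \<in> NS n \<sigma> {lo..hi}" and c: "hi \<le> c"
  shows "(\<lambda>i. if i\<in>{1..n} then c - (if n+1-i\<in>{1..n} then c - a (n+1-(n+1-i)) else undefined) else undefined) = a"
proof (rule ext)
  fix i
  show "(if i\<in>{1..n} then c - (if n+1-i\<in>{1..n} then c - a (n+1-(n+1-i)) else undefined) else undefined) = a i"
  proof (cases "i \<in> {1..n}")
    case True
    then have "n+1-i \<in> {1..n}" "n+1-(n+1-i) = i" by auto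
    moreover have "a i \<in> {lo..hi}" using a True unfolding NS_def by blast
    then have "a i \<le> c" using c by auto
    ultimately show ?thesis using True by simp
  next
    case False
    then show ?thesis using a unfolding NS_def by auto
  qed
qed

lemma part1:
  assumes "\<sigma> permutes {1..n}"
  shows "Ncount n \<sigma> {0..2*(k::nat)} even = Ncount n (\<sigma> \<circ> eta n) {1..2*k+1} even"
  unfolding Ncount_NS
proof (rule card_eq_wit[where f="\<lambda>a i. if i\<in>{1..n} then (2*k+1) - a (n+1-i) else undefined"
        and g="\<lambda>a i. if i\<in>{1..n} then (2*k+1) - a (n+1-i) else undefined"], goal_cases)
  case (1 a)
  from rev_map[OF 1, of "2*k+1"] show ?case by simp
next
  case (2 b)
  have ee: "\<sigma> \<circ> eta n \<circ> eta n = \<sigma>" by (rule ext) (simp add: eta_eta)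
  from rev_map[OF 2, of "2*k+1"] show ?case by (simp add: ee)
next
  case (3 a)
  from rev_inv[OF 3, of "2*k+1"] show ?case by simp
next
  case (4 b)
  from rev_inv[OF 4, of "2*k+1"] show ?case by simp
qed

theorem proposition4p7:
  fixes n :: nat and \<sigma> :: "nat \<Rightarrow> nat"
  assumes "\<sigma> permutes {1..n}"
  shows "as_poly (Omega_l n \<sigma>) = as_poly (Omega_r n (\<sigma> \<circ> eta n)) \<and>
         as_poly (Omega' n \<sigma>) = as_poly (Omegabar' n (eta n \<circ> \<sigma>))"
proof
  show "as_poly (Omega_l n \<sigma>) = as_poly (Omega_r n (\<sigma> \<circ> eta n))"
    by (rule as_poly_cong) (simp add: Omega_l_def Omega_r_def part1[OF assms])
  show "as_poly (Omega' n \<sigma>) = as_poly (Omegabar' n (eta n \<circ> \<sigma>))"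
    by (rule as_poly_cong) (simp only: Omega'_def Omegabar'_def part2[OF assms])
qed

end
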